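(* Let $K\in\mathbb{N}$, $\mathbf{A}=(A_1,\dots,A_K)$ with $A_k>0$, and $[\mathbf{0},\mathbf{A}]=\{\mathbf{x}\in\mathbb{R}^K:0\le x_k\le A_k,\ k=1,\dots,K\}$. Let $f\colon[\mathbf{0},\mathbf{A}]\to\mathbb{R}$ be $L$-Lipschitz continuous with respect to the $\ell_1$-norm and assume $f(\mathbf{y})=0$ for some $\mathbf{y}\in[\mathbf{0},\mathbf{A}]$. Then \[ \int_{[\mathbf{0},\mathbf{A}]}|f(\mathbf{x})|\,\lambda^K(\mathrm{d}\mathbf{x})\le\frac L2\Big(\prod_{k=1}^K A_k\Big)\Big(\sum_{k=1}^K A_k\Big). \] In particular, if $A_k=\varepsilon$ for all $k$, then $\int_{[0,\varepsilon]^K}|f(\mathbf{x})|\,\lambda^K(\mathrm{d}\mathbf{x})\le\varepsilon^{K+1}\frac{LK}{2}$.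
   Context: $\lambda^K$ is Lebesgue measure on $\mathbb{R}^K$; Lipschitz continuity is $|f(\mathbf{x})-f(\mathbf{x}')|\le L\|\mathbf{x}-\mathbf{x}'\|_1$. *)

theory Defs
  imports "HOL-Analysis.Analysis"
begin

end

theory Submission
  imports Defs
begin

lemma refl_img:
  fixes A :: "real ^ 'n"
  shows "(\<lambda>x. (1 / (-1::real)) *\<^sub>R x + - ((1 / (-1::real)) *\<^sub>R A)) ` cbox 0 A = cbox 0 A"
proof -
  have e: "(\<lambda>x. (1 / (-1::real)) *\<^sub>R x + - ((1 / (-1::real)) *\<^sub>R A)) = (\<lambda>x. A - x)"
    by (rule ext) simp
  have "(\<lambda>x. A - x) ` cbox 0 A = cbox 0 A"
  proof
    show "(\<lambda>x. A - x) ` cbox 0 A \<subseteq> cbox 0 A"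
      by (auto simp: mem_box_cart)
    show "cbox 0 A \<subseteq> (\<lambda>x. A - x) ` cbox 0 A"
    proof
      fix x assume x: "x \<in> cbox 0 A"
      have "A - x \<in> cbox 0 A" using x by (auto simp: mem_box_cart)
      moreover have "x = A - (A - x)" by simp
      ultimately show "x \<in> (\<lambda>x. A - x) ` cbox 0 A" by blast
    qed
  qed
  then show ?thesis using e by simp
qed

lemma refl_img2:
  fixes A :: "real ^ 'n"
  shows "(\<lambda>x. A - x) ` cbox 0 A = cbox 0 A"
  using refl_img[of A] by (simp add: image_def)

theorem lemma2:
  fixes A :: "real ^ 'n" and f :: "real ^ 'n \<Rightarrow> real" and L :: real and y :: "real ^ 'n"
  assumes Apos: "\<forall>k. A $ k > 0"
    and lip: "\<forall>x\<in>cbox 0 A. \<forall>x'\<in>cbox 0 A. \<bar>f x - f x'\<bar> \<le> L * (\<Sum>k\<in>UNIV. \<bar>x $ k - x' $ k\<bar>)"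
    and y: "y \<in> cbox 0 A" and fy: "f y = 0"
  shows "(LINT x : cbox 0 A | lborel. \<bar>f x\<bar>)
           \<le> L / 2 * (\<Prod>k\<in>UNIV. A $ k) * (\<Sum>k\<in>UNIV. A $ k) \<and>
         (\<forall>\<epsilon>. (\<forall>k. A $ k = \<epsilon>) \<longrightarrow>
           (LINT x : cbox 0 A | lborel. \<bar>f x\<bar>) \<le> \<epsilon> ^ (CARD('n) + 1) * (L * real CARD('n) / 2))"
proof -
  have A0: "A \<in> cbox 0 A" "0 \<in> cbox 0 A" using Apos by (auto simp: mem_box_cart less_imp_le)
  have Spos: "(\<Sum>k\<in>UNIV. A $ k) > 0"
    by (rule sum_pos) (auto simp: Apos)
  have Ppos: "(\<Prod>k\<in>UNIV. A $ k) > 0"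
    by (rule prod_pos) (auto simp: Apos)
  have "\<bar>f A - f 0\<bar> \<le> L * (\<Sum>k\<in>UNIV. \<bar>A $ k - 0 $ k\<bar>)" using lip A0 by blast
  also have "(\<Sum>k\<in>UNIV. \<bar>A $ k - 0 $ k\<bar>) = (\<Sum>k\<in>UNIV. A $ k)"
    using Apos by (intro sum.cong) (auto simp: less_imp_le)
  finally have "0 \<le> L * (\<Sum>k\<in>UNIV. A $ k)" by linarith
  hence L0: "L \<ge> 0" using Spos by (simp add: zero_le_mult_iff)
  have RHS0: "0 \<le> L / 2 * (\<Prod>k\<in>UNIV. A $ k) * (\<Sum>k\<in>UNIV. A $ k)"
    using L0 Spos Ppos by simp
  have cont: "measure lborel (cbox 0 A) = (\<Prod>k\<in>UNIV. A $ k)"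
    using A0 by (subst content_cbox_cart) auto
  have pw: "\<bar>f x\<bar> + \<bar>f (A - x)\<bar> \<le> L * (\<Sum>k\<in>UNIV. A $ k)" if x: "x \<in> cbox 0 A" for x
  proof -
    have xr: "A - x \<in> cbox 0 A" using x by (auto simp: mem_box_cart)
    have "\<bar>f x - f y\<bar> \<le> L * (\<Sum>k\<in>UNIV. \<bar>x $ k - y $ k\<bar>)" using lip x y by blast
    moreover have "\<bar>f (A - x) - f y\<bar> \<le> L * (\<Sum>k\<in>UNIV. \<bar>(A - x) $ k - y $ k\<bar>)" using lip xr y by blast
    moreover have sb: "(\<Sum>k\<in>UNIV. \<bar>x $ k - y $ k\<bar>) + (\<Sum>k\<in>UNIV. \<bar>(A - x) $ k - y $ k\<bar>)
        \<le> (\<Sum>k\<in>UNIV. A $ k)"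
    proof -
      have "(\<Sum>k\<in>UNIV. \<bar>x $ k - y $ k\<bar>) + (\<Sum>k\<in>UNIV. \<bar>(A - x) $ k - y $ k\<bar>)
          = (\<Sum>k\<in>UNIV. \<bar>x $ k - y $ k\<bar> + \<bar>(A - x) $ k - y $ k\<bar>)"
        by (simp add: sum.distrib)
      also have "\<dots> \<le> (\<Sum>k\<in>UNIV. A $ k)"
      proof (rule sum_mono)
        fix k
        have "0 \<le> x $ k" "x $ k \<le> A $ k" "0 \<le> y $ k" "y $ k \<le> A $ k"
          using x y by (auto simp: mem_box_cart)
        then show "\<bar>x $ k - y $ k\<bar> + \<bar>(A - x) $ k - y $ k\<bar> \<le> A $ k"
          by (simp add: abs_if)
      qed
      finally show ?thesis .
    qed
    ultimately have "\<bar>f x\<bar> + \<bar>f (A - x)\<bar> \<le> L * ((\<Sum>k\<in>UNIV. \<bar>x $ k - y $ k\<bar>) + (\<Sum>k\<in>UNIV. \<bar>(A - x) $ k - y $ k\<bar>))"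
      using fy by (simp add: distrib_left)
    also have "\<dots> \<le> L * (\<Sum>k\<in>UNIV. A $ k)"
      using L0 sb by (rule mult_left_mono[rotated])
    finally show ?thesis .
  qed
  have main: "(LINT x : cbox 0 A | lborel. \<bar>f x\<bar>) \<le> L / 2 * (\<Prod>k\<in>UNIV. A $ k) * (\<Sum>k\<in>UNIV. A $ k)"
  proof (cases "set_integrable lborel (cbox 0 A) (\<lambda>x. \<bar>f x\<bar>)")
    case False
    then have "(LINT x : cbox 0 A | lborel. \<bar>f x\<bar>) = 0"
      by (simp add: set_lebesgue_integral_def set_integrable_def not_integrable_integral_eq)
    then show ?thesis using RHS0 by simp
  next
    case True
    note si = set_borel_integral_eq_integral[OF True]
    define I where "I = integral (cbox 0 A) (\<lambda>x. \<bar>f x\<bar>)"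
    have hi: "((\<lambda>x. \<bar>f x\<bar>) has_integral I) (cbox 0 A)"
      using si(1) unfolding I_def by (rule integrable_integral)
    have "((\<lambda>x. \<bar>f ((-1) *\<^sub>R x + A)\<bar>) has_integral (1 / (\<bar>-1\<bar> ^ DIM(real^'n))) *\<^sub>R I)
          ((\<lambda>x. (1 / (-1::real)) *\<^sub>R x + - ((1 / (-1::real)) *\<^sub>R A)) ` cbox 0 A)"
      by (rule has_integral_affinity[OF hi]) simp
    moreover have "(\<lambda>x. \<bar>f ((-1) *\<^sub>R x + A)\<bar>) = (\<lambda>x. \<bar>f (A - x)\<bar>)"
      by (rule ext) simp
    moreover have "(1 / (\<bar>-1\<bar> ^ DIM(real^'n))) *\<^sub>R I = I" by simp
    ultimately have hr: "((\<lambda>x. \<bar>f (A - x)\<bar>) has_integral I) (cbox 0 A)"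
      by (simp only: refl_img)
    have "((\<lambda>x. \<bar>f x\<bar> + \<bar>f (A - x)\<bar>) has_integral I + I) (cbox 0 A)"
      by (rule has_integral_add[OF hi hr])
    hence "I + I \<le> measure lborel (cbox 0 A) * (L * (\<Sum>k\<in>UNIV. A $ k))"
      using has_integral_le[OF _ has_integral_const pw] by simp
    hence "I \<le> L / 2 * (\<Prod>k\<in>UNIV. A $ k) * (\<Sum>k\<in>UNIV. A $ k)"
      using cont by (simp add: field_simps)
    then show ?thesis using si(2) I_def by simp
  qed
  show ?thesis
  proof (intro conjI allI impI main)
    fix \<epsilon> assume e: "\<forall>k. A $ k = \<epsilon>"
    have eq: "L / 2 * (\<Prod>k\<in>UNIV. A $ k) * (\<Sum>k\<in>UNIV. A $ k) = \<epsilon> ^ (CARD('n) + 1) * (L * real CARD('n) / 2)"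
      using e by simp
    then show "(LINT x : cbox 0 A | lborel. \<bar>f x\<bar>) \<le> \<epsilon> ^ (CARD('n) + 1) * (L * real CARD('n) / 2)"
      using main by (simp only: eq)
  qed
qed

end
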